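(* A vector $w\in\mathbb{R}^n$, $w\ge0$, is strongly bilevel feasible if and only if both of the following hold: (i) there exists exactly one bilevel feasible decomposition $(w^k)_{k\in\mathcal{K}}$ of $w$; (ii) in this unique decomposition, each $w^k$ is individually strongly bilevel feasible.
   Context: Multi-commodity network pricing setting: $G=(\mathcal{V},\mathcal{A})$ directed graph with arc costs $c\ge0$, nonempty tolled arc set $\mathcal{A}_1\subsetneq\mathcal{A}$, $n=|\mathcal{A}_1|$, $N$ node–arc incidence matrix; finite set $\mathcal{K}$ of commodities, commodity $k$ having origin $o^k$ and destination $d^k$ connected by a path of arcs not in $\mathcal{A}_1$; $b^k_{o^k}=1$, $b^k_{d^k}=-1$, other entries $0$; $\mathcal{X}^k=\{x\in\mathbb{R}^{\mathcal{A}}: Nx=b^k,\ x\ge0\}$; $x_{\mathcal{A}_1}$ is the restriction of $x$ to $\mathcal{A}_1$. For $t\in\mathbb{R}^n$ let $f^k(t)=\min\{c^\top x+t^\top x_{\mathcal{A}_1}: x\in\mathcal{X}^k\}$ if $t\ge0$, $-\infty$ otherwise; $f=\sum_k f^k$; $g^k(w)=\sup_t\{f^k(t)-t^\top w\}$, $g(w)=\sup_t\{f(t)-t^\top w\}$. A vector $w\ge0$ is strongly bilevel feasible if $\{w\}$ is the projection onto $w$-space of a face of $\operatorname{epi}(g)$ whose affine hull's direction space does not contain $(0,1)$ (equivalently $\{(w,g(w))\}$ is a face of $\operatorname{epi}(g)$); $w^k\ge0$ is individually strongly bilevel feasible if the same holds with $g^k$ in place of $g$. A decomposition of $w$ is a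 tuple $(w^k)_{k\in\mathcal{K}}$ of vectors $w^k\ge0$ with $\sum_k w^k=w$; it is bilevel feasible if $g(w)=\sum_k g^k(w^k)$. *)

theory Defs
  imports "HOL-Analysis.Analysis" "HOL-Library.Extended_Real"
begin

text \<open>Arcs are the elements of the finite type ('t + 'u): the tolled arcs A1 are the
  arcs Inl i (indexed by the finite type 't, so R^n = real^'t), the untolled arcs
  are the arcs Inr j. Thus A1 is nonempty and a proper subset of A.\<close>

fun is_path :: "('a \<Rightarrow> 'v) \<Rightarrow> ('a \<Rightarrow> 'v) \<Rightarrow> 'a list \<Rightarrow> 'v \<Rightarrow> 'v \<Rightarrow> bool" where
  "is_path tail head [] v w = (v = w)"
| "is_path tail head (a # as) v w = (tail a = v \<and> is_path tail head as (head a) w)"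

definition supply_vec :: "'v \<Rightarrow> 'v \<Rightarrow> 'v \<Rightarrow> real" where
  "supply_vec o' d v = (if v = o' then 1 else 0) - (if v = d then 1 else 0)"

definition flow_set ::
  "(('t::finite + 'u::finite) \<Rightarrow> 'v) \<Rightarrow> (('t + 'u) \<Rightarrow> 'v) \<Rightarrow> ('v \<Rightarrow> real) \<Rightarrow> (('t + 'u) \<Rightarrow> real) set" where
  "flow_set tail head b = {x. (\<forall>v. (\<Sum>a\<in>{a. tail a = v}. x a) - (\<Sum>a\<in>{a. head a = v}. x a) = b v)
                          \<and> (\<forall>a. 0 \<le> x a)}"

definition nonneg :: "real ^ 't \<Rightarrow> bool" where
  "nonneg t = (\<forall>i. 0 \<le> t $ i)"

definition fk ::
  "(('t::finite + 'u::finite) \<Rightarrow> 'v) \<Rightarrow> (('t + 'u) \<Rightarrow> 'v) \<Rightarrow> (('t + 'u) \<Rightarrow> real)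
   \<Rightarrow> 'v \<Rightarrow> 'v \<Rightarrow> real ^ 't \<Rightarrow> ereal" where
  "fk tail head c o' d t =
     (if nonneg t
      then Inf {ereal ((\<Sum>a\<in>UNIV. c a * x a) + (\<Sum>i\<in>UNIV. t $ i * x (Inl i))) | x.
                  x \<in> flow_set tail head (supply_vec o' d)}
      else -\<infinity>)"

definition conj_fun :: "(real ^ 't \<Rightarrow> ereal) \<Rightarrow> real ^ 't \<Rightarrow> ereal" where
  "conj_fun h w = (SUP t. h t - ereal (\<Sum>i\<in>UNIV. t $ i * w $ i))"

definition epi :: "('b \<Rightarrow> ereal) \<Rightarrow> ('b \<times> real) set" where
  "epi h = {(w, r). h w \<le> ereal r}"

definition direction_space :: "'b::real_vector set \<Rightarrow> 'b set" where
  "direction_space F = {x - y | x y. x \<in> affine hull F \<and> y \<in> affine hull F}"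

text \<open>w is (individually) strongly bilevel feasible w.r.t. h (h = g resp. g^k).\<close>
definition strongly_bf :: "(real ^ 't \<Rightarrow> ereal) \<Rightarrow> real ^ 't \<Rightarrow> bool" where
  "strongly_bf h w = (nonneg w \<and>
     (\<exists>F. F face_of epi h \<and> fst ` F = {w} \<and> (0, 1) \<notin> direction_space F))"

text \<open>Decomposition of w over commodity set K (tuples indexed by K, represented by
  functions that vanish outside K).\<close>
definition decomposition :: "'k set \<Rightarrow> real ^ 't \<Rightarrow> ('k \<Rightarrow> real ^ 't) \<Rightarrow> bool" where
  "decomposition K w W = ((\<forall>k\<in>K. nonneg (W k)) \<and> (\<forall>k. k \<notin> K \<longrightarrow> W k = 0) \<and> (\<Sum>k\<in>K. W k) = w)"

end

theory Submission
  imports Defs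
begin

lemma sbf_iff:
  fixes h :: "real^'t \<Rightarrow> ereal"
  shows "strongly_bf h w \<longleftrightarrow> nonneg w \<and> (\<exists>r. h w = ereal r \<and> (w,r) extreme_point_of epi h)"
proof
  assume "strongly_bf h w"
  then obtain F where nn: "nonneg w" and F: "F face_of epi h" "fst ` F = {w}" "(0,1) \<notin> direction_space F"
    unfolding strongly_bf_def by blast
  obtain p0 where "p0 \<in> F" "fst p0 = w" using F(2) by (metis imageE insertI1)
  define r where "r = snd p0"
  have wr: "(w,r) \<in> F" using \<open>p0 \<in> F\<close> \<open>fst p0 = w\<close> r_def by (metis prod.collapse)
  have Fs: "F = {(w,r)}"
  proof (rule ccontr)
    assume "F \<noteq> {(w,r)}"
    then obtain p where p: "p \<in> F" "p \<noteq> (w,r)" using wr by blast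
    have fp: "fst p = w" using F(2) p(1) by blast
    define s where "s = snd p"
    have sne: "s \<noteq> r" using p(2) fp s_def by (metis prod.collapse)
    have pa: "(w,s) \<in> affine hull F" using p(1) fp s_def by (metis hull_inc prod.collapse)
    have ra: "(w,r) \<in> affine hull F" using wr by (metis hull_inc)
    define m where "m = 1/(s - r)"
    have "(1-m) *\<^sub>R (w,r) + m *\<^sub>R (w,s) \<in> affine hull F"
      by (rule mem_affine[OF affine_affine_hull ra pa]) simp
    moreover have "(1-m) *\<^sub>R (w,r) + m *\<^sub>R (w,s) = (w, r+1)"
    proof -
      have "(1-m) *\<^sub>R w + m *\<^sub>R w = w" by (simp add: algebra_simps)
      moreover have "(1-m) * r + m * s = r + 1"
      proof -
        have "m * (s - r) = 1" using sne by (simp add: m_def)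
        then show ?thesis by (simp add: algebra_simps)
      qed
      ultimately show ?thesis by simp
    qed
    ultimately have "(w, r+1) \<in> affine hull F" by simp
    then have "(w, r+1) - (w,r) \<in> direction_space F" unfolding direction_space_def using ra by blast
    then show False using F(3) by simp
  qed
  have ext: "(w,r) extreme_point_of epi h" using F(1) Fs face_of_singleton by metis
  then have inepi: "h w \<le> ereal r" unfolding extreme_point_of_def epi_def by auto
  have "h w = ereal r"
  proof (rule ccontr)
    assume "h w \<noteq> ereal r"
    then have lt: "h w < ereal r" using inepi by simp
    obtain a where a: "h w \<le> ereal a" "a < r"
    proof (cases "h w")
      case (real a0) then show ?thesis using lt that by auto
    next
      case PInf then show ?thesis using lt by simp
    next
      case MInf then show ?thesis using that[of "r - 1"] by simp
    qed
    have e1: "(w,a) \<in> epi h" using a unfolding epi_def by simp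
    have "ereal a \<le> ereal (2*r-a)" using a by simp
    then have "h w \<le> ereal (2*r-a)" using a(1) by (rule order_trans[rotated])
    then have e2: "(w,2*r-a) \<in> epi h" unfolding epi_def by simp
    have "(w,r) \<in> open_segment (w,a) (w,2*r-a)"
      unfolding in_segment
    proof
      show "(w, a) \<noteq> (w, 2 * r - a)" using a by simp
      show "\<exists>u>0. u < 1 \<and> (w, r) = (1 - u) *\<^sub>R (w, a) + u *\<^sub>R (w, 2 * r - a)"
      proof (rule exI[of _ "1/2"])
        have "(1 - 1/2::real) *\<^sub>R w + (1/2::real) *\<^sub>R w = w"
          using scaleR_add_left[of "1-1/2" "1/2" w] by simp
        moreover have "(1 - 1/2) * a + 1/2 * (2 * r - a) = r" by (simp add: field_simps)
        ultimately show "1/2 > (0::real) \<and> 1/2 < (1::real) \<and> (w, r) = (1 - 1/2) *\<^sub>R (w, a) + (1/2) *\<^sub>R (w, 2 * r - a)"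
          by simp
      qed
    qed
    then show False using ext e1 e2 unfolding extreme_point_of_def by blast
  qed
  then show "nonneg w \<and> (\<exists>r. h w = ereal r \<and> (w,r) extreme_point_of epi h)" using nn ext by blast
next
  assume "nonneg w \<and> (\<exists>r. h w = ereal r \<and> (w,r) extreme_point_of epi h)"
  then obtain r where nn: "nonneg w" and ext: "(w,r) extreme_point_of epi h" by blast
  have "{(w,r)} face_of epi h" using ext face_of_singleton by metis
  moreover have "fst ` {(w,r)} = {w}" by simp
  moreover have "(0,1) \<notin> direction_space {(w,r)}" unfolding direction_space_def by simp
  ultimately show "strongly_bf h w" unfolding strongly_bf_def using nn by blast
qed


lemma sum_upd:
  fixes f :: "'k \<Rightarrow> 'a::ab_group_add"
  assumes "finite K" "k0 \<in> K"
  shows "(\<Sum>k\<in>K. (f(k0:=y)) k) = (\<Sum>k\<in>K. f k) - f k0 + y"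
proof -
  have "(\<Sum>k\<in>K. (f(k0:=y)) k) = (f(k0:=y)) k0 + (\<Sum>k\<in>K-{k0}. (f(k0:=y)) k)"
    using assms by (simp add: sum.remove)
  also have "(\<Sum>k\<in>K-{k0}. (f(k0:=y)) k) = (\<Sum>k\<in>K-{k0}. f k)" by (rule sum.cong) auto
  also have "(\<Sum>k\<in>K. f k) = f k0 + (\<Sum>k\<in>K-{k0}. f k)" using assms by (simp add: sum.remove)
  ultimately show ?thesis by (simp add: algebra_simps)
qed

lemma sum_ereal_cong:
  assumes "\<forall>k\<in>K. f k = ereal (g k)"
  shows "(\<Sum>k\<in>K. f k) = ereal (\<Sum>k\<in>K. g k)"
proof -
  have "(\<Sum>k\<in>K. f k) = (\<Sum>k\<in>K. ereal (g k))" using assms by (intro sum.cong) auto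
  then show ?thesis by simp
qed

lemma nonneg_comb:
  assumes "nonneg x" "nonneg y" "0 \<le> u" "u \<le> 1"
  shows "nonneg ((1-u) *\<^sub>R x + u *\<^sub>R y)"
  using assms unfolding nonneg_def by simp

lemma comb_shift: fixes X p q :: "'a::real_vector"
  shows "(1-u) *\<^sub>R (X + p) + u *\<^sub>R (X + q) = X + ((1-u) *\<^sub>R p + u *\<^sub>R q)"
  by (simp add: algebra_simps)
lemma half_mix: fixes w a b :: "'a::real_vector"
  shows "(1/2::real) *\<^sub>R (w - a + b) + (1/2::real) *\<^sub>R (w - b + a) = w"
proof -
  have "(1/2::real) *\<^sub>R (w - a + b) + (1/2::real) *\<^sub>R (w - b + a) = (1/2::real) *\<^sub>R ((w - a + b) + (w - b + a))"
    by (simp only: scaleR_add_right)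
  also have "(w - a + b) + (w - b + a) = (2::real) *\<^sub>R w" by (simp add: scaleR_2 algebra_simps)
  finally show ?thesis by simp
qed
lemma abstract:
  fixes G :: "real^'t \<Rightarrow> ereal" and Gk :: "'k \<Rightarrow> real^'t \<Rightarrow> ereal" and K :: "'k set"
  assumes fin: "finite K"
  and A: "\<And>v W. decomposition K v W \<Longrightarrow> G v \<le> (\<Sum>k\<in>K. Gk k (W k))"
  and B: "\<And>v. nonneg v \<Longrightarrow> G v \<noteq> \<infinity> \<Longrightarrow> \<exists>W. decomposition K v W \<and> (\<Sum>k\<in>K. Gk k (W k)) \<le> G v"
  and Gnn: "\<And>v. G v \<noteq> \<infinity> \<Longrightarrow> nonneg v"
  and Gknn: "\<And>k v. k\<in>K \<Longrightarrow> Gk k v \<noteq> \<infinity> \<Longrightarrow> nonneg v"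
  and Gkfin: "\<And>k v. k\<in>K \<Longrightarrow> nonneg v \<Longrightarrow> Gk k v \<noteq> \<infinity>"
  and Gkminf: "\<And>k v. k\<in>K \<Longrightarrow> Gk k v \<noteq> -\<infinity>"
  and Gkconv: "\<And>k x y u a b. k\<in>K \<Longrightarrow> Gk k x \<le> ereal a \<Longrightarrow> Gk k y \<le> ereal b \<Longrightarrow> 0 \<le> u \<Longrightarrow> u \<le> 1
                 \<Longrightarrow> Gk k ((1-u) *\<^sub>R x + u *\<^sub>R y) \<le> ereal ((1-u)*a + u*b)"
  and wnn: "nonneg w"
  shows "strongly_bf G w \<longleftrightarrow>
           (\<exists>W. decomposition K w W \<and> G w = (\<Sum>k\<in>K. Gk k (W k))
              \<and> (\<forall>W'. decomposition K w W' \<and> G w = (\<Sum>k\<in>K. Gk k (W' k)) \<longrightarrow> W' = W)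
              \<and> (\<forall>k\<in>K. strongly_bf (Gk k) (W k)))"
proof -
  define rG where "rG k v = real_of_ereal (Gk k v)" for k v
  have Gk_eq: "Gk k v = ereal (rG k v)" if "k \<in> K" "nonneg v" for k v
    using Gkfin[OF that] Gkminf[OF that(1)] unfolding rG_def by (cases "Gk k v") auto
  have dec_eq: "(\<Sum>k\<in>K. Gk k (V k)) = ereal (\<Sum>k\<in>K. rG k (V k))" if "decomposition K v V" for v V
    using that Gk_eq unfolding decomposition_def by (intro sum_ereal_cong) auto
  have epi_mix: "(v - V k0 + y, (\<Sum>k\<in>K. rG k (V k)) - rG k0 (V k0) + s) \<in> epi G"
    if D: "decomposition K v V" and k0: "k0 \<in> K" and y: "nonneg y" and ys: "Gk k0 y \<le> ereal s" for v V k0 y s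
  proof -
    have D': "decomposition K (v - V k0 + y) (V(k0:=y))"
      unfolding decomposition_def
    proof (intro conjI)
      show "\<forall>k\<in>K. nonneg ((V(k0:=y)) k)" using D y unfolding decomposition_def by auto
      show "\<forall>k. k \<notin> K \<longrightarrow> (V(k0:=y)) k = 0" using D k0 unfolding decomposition_def by auto
      show "(\<Sum>k\<in>K. (V(k0:=y)) k) = v - V k0 + y"
        using sum_upd[OF fin k0, of V y] D unfolding decomposition_def by simp
    qed
    have "G (v - V k0 + y) \<le> (\<Sum>k\<in>K. Gk k ((V(k0:=y)) k))" by (rule A[OF D'])
    also have "\<dots> \<le> (\<Sum>k\<in>K. ereal (((\<lambda>k. rG k (V k))(k0:=s)) k))"
    proof (rule sum_mono)
      fix k assume "k \<in> K"
      then show "Gk k ((V(k0:=y)) k) \<le> ereal (((\<lambda>k. rG k (V k))(k0:=s)) k)"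
        using ys Gk_eq D unfolding decomposition_def by auto
    qed
    also have "\<dots> = ereal ((\<Sum>k\<in>K. rG k (V k)) - rG k0 (V k0) + s)"
      using sum_upd[OF fin k0, of "\<lambda>k. rG k (V k)" s] by simp
    finally show ?thesis unfolding epi_def by simp
  qed
  show ?thesis
  proof
    assume "strongly_bf G w"
    then obtain r where Gw: "G w = ereal r" and E: "(w,r) extreme_point_of epi G"
      using sbf_iff by blast
    have mid: False if "p \<in> epi G" "q \<in> epi G" "p \<noteq> q" "0 < u" "u < 1"
      "(w,r) = (1-u) *\<^sub>R p + u *\<^sub>R q" for p q u
      using E that unfolding extreme_point_of_def in_segment by blast
    obtain W where D: "decomposition K w W" and le: "(\<Sum>k\<in>K. Gk k (W k)) \<le> G w"
      using B[OF wnn] Gw by auto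
    have eq: "G w = (\<Sum>k\<in>K. Gk k (W k))" using A[OF D] le by simp
    define \<phi> where "\<phi> k = rG k (W k)" for k
    have sumphi: "(\<Sum>k\<in>K. \<phi> k) = r" using eq Gw dec_eq[OF D] unfolding \<phi>_def by simp
    have uniq: "W' = W" if D': "decomposition K w W'" and eq': "G w = (\<Sum>k\<in>K. Gk k (W' k))" for W'
    proof (rule ccontr)
      assume "W' \<noteq> W"
      then obtain k0 where ne: "W' k0 \<noteq> W k0" by auto
      have k0: "k0 \<in> K"
      proof (rule ccontr)
        assume "k0 \<notin> K"
        then have "W' k0 = 0" "W k0 = 0" using D D' unfolding decomposition_def by blast+
        then show False using ne by simp
      qed
      define \<psi> where "\<psi> k = rG k (W' k)" for k
      have sumpsi: "(\<Sum>k\<in>K. \<psi> k) = r" using eq' Gw dec_eq[OF D'] unfolding \<psi>_def by simp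
      have nW: "nonneg (W k0)" "nonneg (W' k0)" using D D' k0 unfolding decomposition_def by auto
      have a: "(w - W k0 + W' k0, r - \<phi> k0 + \<psi> k0) \<in> epi G"
        using epi_mix[OF D k0 nW(2), of "\<psi> k0"] Gk_eq[OF k0 nW(2)] sumphi unfolding \<phi>_def \<psi>_def by simp
      have b: "(w - W' k0 + W k0, r - \<psi> k0 + \<phi> k0) \<in> epi G"
        using epi_mix[OF D' k0 nW(1), of "\<phi> k0"] Gk_eq[OF k0 nW(1)] sumpsi unfolding \<phi>_def \<psi>_def by simp
      have neq: "(w - W k0 + W' k0, r - \<phi> k0 + \<psi> k0) \<noteq> (w - W' k0 + W k0, r - \<psi> k0 + \<phi> k0)"
        using ne by (auto simp: vec_eq_iff)
      have "(w,r) = (1 - 1/2) *\<^sub>R (w - W k0 + W' k0, r - \<phi> k0 + \<psi> k0) + (1/2) *\<^sub>R (w - W' k0 + W k0, r - \<psi> k0 + \<phi> k0)"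
        using half_mix[of w "W k0" "W' k0"] by (simp add: field_simps)
      from mid[OF a b neq, of "1/2"] this show False by simp
    qed
    have sbk: "strongly_bf (Gk k0) (W k0)" if k0: "k0 \<in> K" for k0
    proof -
      have nW: "nonneg (W k0)" using D k0 unfolding decomposition_def by auto
      have ext: "(W k0, \<phi> k0) extreme_point_of epi (Gk k0)"
        unfolding extreme_point_of_def
      proof (intro conjI ballI)
        show "(W k0, \<phi> k0) \<in> epi (Gk k0)" using Gk_eq[OF k0 nW] unfolding epi_def \<phi>_def by simp
        fix p q assume p: "p \<in> epi (Gk k0)" and q: "q \<in> epi (Gk k0)"
        show "(W k0, \<phi> k0) \<notin> open_segment p q"
        proof
          assume "(W k0, \<phi> k0) \<in> open_segment p q"
          then obtain u where pq: "p \<noteq> q" "0 < u" "u < 1" "(W k0, \<phi> k0) = (1-u) *\<^sub>R p + u *\<^sub>R q"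
            unfolding in_segment by blast
          have gp: "Gk k0 (fst p) \<le> ereal (snd p)" using p unfolding epi_def by auto
          have gq: "Gk k0 (fst q) \<le> ereal (snd q)" using q unfolding epi_def by auto
          have "Gk k0 (fst p) \<noteq> \<infinity>" using gp by auto
          then have np: "nonneg (fst p)" using Gknn[OF k0] by blast
          have "Gk k0 (fst q) \<noteq> \<infinity>" using gq by auto
          then have nq: "nonneg (fst q)" using Gknn[OF k0] by blast
          have a: "(w - W k0 + fst p, r - \<phi> k0 + snd p) \<in> epi G"
            using epi_mix[OF D k0 np gp] sumphi unfolding \<phi>_def by simp
          have b: "(w - W k0 + fst q, r - \<phi> k0 + snd q) \<in> epi G"
            using epi_mix[OF D k0 nq gq] sumphi unfolding \<phi>_def by simp
          have neq: "(w - W k0 + fst p, r - \<phi> k0 + snd p) \<noteq> (w - W k0 + fst q, r - \<phi> k0 + snd q)"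
            using pq(1) by (auto simp: prod_eq_iff)
          have c1: "W k0 = (1-u) *\<^sub>R fst p + u *\<^sub>R fst q" using pq(4) by (simp add: prod_eq_iff)
          have c2: "\<phi> k0 = (1-u) * snd p + u * snd q" using pq(4) by (simp add: prod_eq_iff)
          have "(w,r) = (1-u) *\<^sub>R (w - W k0 + fst p, r - \<phi> k0 + snd p) + u *\<^sub>R (w - W k0 + fst q, r - \<phi> k0 + snd q)"
            using c1 c2 comb_shift[of u "w - W k0" "fst p" "fst q"] by (simp add: algebra_simps)
          then show False using mid[OF a b neq pq(2,3)] by simp
        qed
      qed
      show ?thesis using sbf_iff nW Gk_eq[OF k0 nW] ext unfolding \<phi>_def by blast
    qed
    show "\<exists>W. decomposition K w W \<and> G w = (\<Sum>k\<in>K. Gk k (W k))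
              \<and> (\<forall>W'. decomposition K w W' \<and> G w = (\<Sum>k\<in>K. Gk k (W' k)) \<longrightarrow> W' = W)
              \<and> (\<forall>k\<in>K. strongly_bf (Gk k) (W k))"
      using D eq uniq sbk by blast
  next
    assume "\<exists>W. decomposition K w W \<and> G w = (\<Sum>k\<in>K. Gk k (W k))
              \<and> (\<forall>W'. decomposition K w W' \<and> G w = (\<Sum>k\<in>K. Gk k (W' k)) \<longrightarrow> W' = W)
              \<and> (\<forall>k\<in>K. strongly_bf (Gk k) (W k))"
    then obtain W where D: "decomposition K w W" and eq: "G w = (\<Sum>k\<in>K. Gk k (W k))"
      and uniq: "\<And>W'. decomposition K w W' \<Longrightarrow> G w = (\<Sum>k\<in>K. Gk k (W' k)) \<Longrightarrow> W' = W"
      and sbk: "\<And>k. k\<in>K \<Longrightarrow> strongly_bf (Gk k) (W k)" by blast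
    define \<phi> where "\<phi> k = rG k (W k)" for k
    have nW: "nonneg (W k)" if "k \<in> K" for k using D that unfolding decomposition_def by auto
    have Ek: "(W k, \<phi> k) extreme_point_of epi (Gk k)" if k: "k \<in> K" for k
    proof -
      obtain s where "Gk k (W k) = ereal s" "(W k, s) extreme_point_of epi (Gk k)"
        using sbk[OF k] sbf_iff by blast
      then show ?thesis unfolding \<phi>_def rG_def by simp
    qed
    define r where "r = (\<Sum>k\<in>K. \<phi> k)"
    have Gw: "G w = ereal r" using eq dec_eq[OF D] unfolding r_def \<phi>_def by simp
    have ext: "(w,r) extreme_point_of epi G"
      unfolding extreme_point_of_def
    proof (intro conjI ballI)
      show "(w,r) \<in> epi G" using Gw unfolding epi_def by simp
      fix a b assume a: "a \<in> epi G" and b: "b \<in> epi G"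
      show "(w,r) \<notin> open_segment a b"
      proof
        assume "(w,r) \<in> open_segment a b"
        then obtain u where ab: "a \<noteq> b" "0 < u" "u < 1" "(w,r) = (1-u) *\<^sub>R a + u *\<^sub>R b"
          unfolding in_segment by blast
        have ga: "G (fst a) \<le> ereal (snd a)" using a unfolding epi_def by auto
        have gb: "G (fst b) \<le> ereal (snd b)" using b unfolding epi_def by auto
        have na: "G (fst a) \<noteq> \<infinity>" using ga by auto
        have nb: "G (fst b) \<noteq> \<infinity>" using gb by auto
        obtain A' where DA: "decomposition K (fst a) A'" and leA: "(\<Sum>k\<in>K. Gk k (A' k)) \<le> G (fst a)"
          using B[OF Gnn[OF na] na] by blast
        obtain B' where DB: "decomposition K (fst b) B'" and leB: "(\<Sum>k\<in>K. Gk k (B' k)) \<le> G (fst b)"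
          using B[OF Gnn[OF nb] nb] by blast
        define \<alpha> where "\<alpha> k = rG k (A' k)" for k
        define \<beta> where "\<beta> k = rG k (B' k)" for k
        have nA: "nonneg (A' k)" "nonneg (B' k)" if "k \<in> K" for k
          using DA DB that unfolding decomposition_def by auto
        have "ereal (\<Sum>k\<in>K. \<alpha> k) \<le> ereal (snd a)"
          using order_trans[OF leA ga] dec_eq[OF DA] unfolding \<alpha>_def by simp
        then have sa: "(\<Sum>k\<in>K. \<alpha> k) \<le> snd a" by simp
        have "ereal (\<Sum>k\<in>K. \<beta> k) \<le> ereal (snd b)"
          using order_trans[OF leB gb] dec_eq[OF DB] unfolding \<beta>_def by simp
        then have sb: "(\<Sum>k\<in>K. \<beta> k) \<le> snd b" by simp
        define Z where "Z k = (1-u) *\<^sub>R A' k + u *\<^sub>R B' k" for k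
        have fw: "w = (1-u) *\<^sub>R fst a + u *\<^sub>R fst b" using ab(4) by (simp add: prod_eq_iff)
        have sr: "r = (1-u) * snd a + u * snd b" using ab(4) by (simp add: prod_eq_iff)
        have DZ: "decomposition K w Z"
        proof -
          have "(\<Sum>k\<in>K. Z k) = (1-u) *\<^sub>R (\<Sum>k\<in>K. A' k) + u *\<^sub>R (\<Sum>k\<in>K. B' k)"
            unfolding Z_def by (simp add: sum.distrib scaleR_sum_right)
          also have "\<dots> = w" using DA DB fw unfolding decomposition_def by simp
          moreover have "\<forall>k\<in>K. nonneg (Z k)" unfolding Z_def using nA ab(2,3) by (auto intro!: nonneg_comb)
          moreover have "\<forall>k. k \<notin> K \<longrightarrow> Z k = 0" using DA DB unfolding decomposition_def Z_def by auto
          ultimately show ?thesis unfolding decomposition_def by blast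
        qed
        define \<zeta> where "\<zeta> k = rG k (Z k)" for k
        have zle: "\<zeta> k \<le> (1-u) * \<alpha> k + u * \<beta> k" if k: "k \<in> K" for k
        proof -
          have "Gk k (Z k) \<le> ereal ((1-u) * \<alpha> k + u * \<beta> k)"
            unfolding Z_def using Gkconv[OF k, of "A' k" "\<alpha> k" "B' k" "\<beta> k" u] Gk_eq[OF k] nA[OF k] ab(2,3)
            unfolding \<alpha>_def \<beta>_def by simp
          moreover have "nonneg (Z k)" using DZ k unfolding decomposition_def by auto
          ultimately show ?thesis using Gk_eq[OF k] unfolding \<zeta>_def by simp
        qed
        have r1: "r \<le> (\<Sum>k\<in>K. \<zeta> k)" using A[OF DZ] Gw dec_eq[OF DZ] unfolding \<zeta>_def by simp
        have "(\<Sum>k\<in>K. \<zeta> k) \<le> (\<Sum>k\<in>K. (1-u) * \<alpha> k + u * \<beta> k)" by (rule sum_mono) (rule zle)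
        also have "\<dots> = (1-u) * (\<Sum>k\<in>K. \<alpha> k) + u * (\<Sum>k\<in>K. \<beta> k)"
          by (simp add: sum.distrib sum_distrib_left)
        finally have r2: "(\<Sum>k\<in>K. \<zeta> k) \<le> (1-u) * (\<Sum>k\<in>K. \<alpha> k) + u * (\<Sum>k\<in>K. \<beta> k)" .
        have m1: "(1-u) * (\<Sum>k\<in>K. \<alpha> k) \<le> (1-u) * snd a" using sa ab(3) by simp
        have m2: "u * (\<Sum>k\<in>K. \<beta> k) \<le> u * snd b" using sb ab(2) by simp
        have sz: "(\<Sum>k\<in>K. \<zeta> k) = r" using r1 r2 m1 m2 sr by linarith
        have ZW: "Z = W" using uniq[OF DZ] Gw dec_eq[OF DZ] sz unfolding \<zeta>_def by simp
        have "(\<Sum>k\<in>K. (1-u) * \<alpha> k + u * \<beta> k - \<zeta> k) = 0"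
        proof -
          have "(\<Sum>k\<in>K. (1-u) * \<alpha> k + u * \<beta> k - \<zeta> k) = (1-u) * (\<Sum>k\<in>K. \<alpha> k) + u * (\<Sum>k\<in>K. \<beta> k) - (\<Sum>k\<in>K. \<zeta> k)"
            by (simp add: sum.distrib sum_distrib_left sum_subtractf)
          then show ?thesis using r1 r2 m1 m2 sr sz by linarith
        qed
        then have zeq: "\<zeta> k = (1-u) * \<alpha> k + u * \<beta> k" if "k \<in> K" for k
          using sum_nonneg_eq_0_iff[OF fin, of "\<lambda>k. (1-u) * \<alpha> k + u * \<beta> k - \<zeta> k"] zle that by auto
        have AB: "A' k = W k \<and> B' k = W k \<and> \<alpha> k = \<phi> k \<and> \<beta> k = \<phi> k" if k: "k \<in> K" for k
        proof -
          have pA: "(A' k, \<alpha> k) \<in> epi (Gk k)" using Gk_eq[OF k nA(1)[OF k]] unfolding epi_def \<alpha>_def by simp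
          have pB: "(B' k, \<beta> k) \<in> epi (Gk k)" using Gk_eq[OF k nA(2)[OF k]] unfolding epi_def \<beta>_def by simp
          have cmb: "(W k, \<phi> k) = (1-u) *\<^sub>R (A' k, \<alpha> k) + u *\<^sub>R (B' k, \<beta> k)"
          proof -
            have "W k = Z k" using ZW by simp
            moreover have "\<phi> k = \<zeta> k" using ZW unfolding \<phi>_def \<zeta>_def by simp
            ultimately show ?thesis using zeq[OF k] unfolding Z_def by simp
          qed
          have same: "(A' k, \<alpha> k) = (B' k, \<beta> k)"
          proof (rule ccontr)
            assume "(A' k, \<alpha> k) \<noteq> (B' k, \<beta> k)"
            then have "(W k, \<phi> k) \<in> open_segment (A' k, \<alpha> k) (B' k, \<beta> k)"
              unfolding in_segment using cmb ab(2,3) by blast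
            then show False using Ek[OF k] pA pB unfolding extreme_point_of_def by blast
          qed
          have "(W k, \<phi> k) = (1-u) *\<^sub>R (A' k, \<alpha> k) + u *\<^sub>R (A' k, \<alpha> k)"
            using cmb same by simp
          then have "(W k, \<phi> k) = (A' k, \<alpha> k)" by (simp only: scaleR_collapse)
          then show ?thesis using same by simp
        qed
        have "fst a = (\<Sum>k\<in>K. A' k)" using DA unfolding decomposition_def by simp
        also have "\<dots> = (\<Sum>k\<in>K. W k)" using AB by (intro sum.cong) auto
        also have "\<dots> = w" using D unfolding decomposition_def by simp
        finally have "fst a = w" .
        have "fst b = (\<Sum>k\<in>K. B' k)" using DB unfolding decomposition_def by simp
        also have "\<dots> = (\<Sum>k\<in>K. W k)" using AB by (intro sum.cong) auto
        also have "\<dots> = w" using D unfolding decomposition_def by simp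
        finally have "fst b = w" .
        note \<open>fst a = w\<close> \<open>fst b = w\<close>
        moreover have "(\<Sum>k\<in>K. \<alpha> k) = r" "(\<Sum>k\<in>K. \<beta> k) = r" using AB unfolding r_def by (auto intro: sum.cong)
        ultimately have fab: "fst a = fst b" and ra: "r \<le> snd a" and rb: "r \<le> snd b" using sa sb by auto
        have e1: "(1-u) * (snd a - r) \<ge> 0" using ra ab(3) by simp
        have e2: "u * (snd b - r) \<ge> 0" using rb ab(2) by simp
        have "(1-u) * (snd a - r) + u * (snd b - r) = 0" using sr by (simp add: algebra_simps)
        then have "(1-u) * (snd a - r) = 0" "u * (snd b - r) = 0" using e1 e2 by linarith+
        then have "snd a = r" "snd b = r" using ab(2,3) by auto
        then have "a = b" using fab by (simp add: prod_eq_iff)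
        then show False using ab(1) by simp
      qed
    qed
    show "strongly_bf G w" using sbf_iff wnn Gw ext by blast
  qed
qed


lemma path_flow:
  assumes "is_path tail head p o' d"
  shows "(\<lambda>a. real (count_list p a)) \<in> flow_set tail head (supply_vec o' d)"
  using assms
proof (induction p arbitrary: o')
  case Nil
  then show ?case unfolding flow_set_def supply_vec_def by simp
next
  case (Cons a as)
  then have ta: "tail a = o'" and pa: "is_path tail head as (head a) d" by auto
  have IH: "(\<Sum>b\<in>{b. tail b = v}. real (count_list as b)) - (\<Sum>b\<in>{b. head b = v}. real (count_list as b))
            = supply_vec (head a) d v" for v
    using Cons.IH[OF pa] unfolding flow_set_def by blast
  have cl: "real (count_list (a # as) b) = real (count_list as b) + (if b = a then 1 else 0)" for b
    by auto
  have "(\<Sum>b\<in>{b. tail b = v}. real (count_list (a#as) b)) - (\<Sum>b\<in>{b. head b = v}. real (count_list (a#as) b))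
          = supply_vec o' d v" for v
  proof -
    have s1: "(\<Sum>b\<in>{b. tail b = v}. real (count_list (a#as) b)) = (\<Sum>b\<in>{b. tail b = v}. real (count_list as b)) + (if tail a = v then 1 else 0)"
      unfolding cl by (simp add: sum.distrib sum.delta')
    have s2: "(\<Sum>b\<in>{b. head b = v}. real (count_list (a#as) b)) = (\<Sum>b\<in>{b. head b = v}. real (count_list as b)) + (if head a = v then 1 else 0)"
      unfolding cl by (simp add: sum.distrib sum.delta')
    show ?thesis using IH[of v] ta unfolding s1 s2 supply_vec_def by auto
  qed
  then show ?case unfolding flow_set_def by simp
qed

lemma cf_ge: "h t - ereal (\<Sum>i\<in>UNIV. t $ i * w $ i) \<le> conj_fun h w"
  unfolding conj_fun_def by (rule SUP_upper) simp

lemma cf_minf: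
  assumes "0 \<le> h 0" shows "conj_fun h w \<noteq> -\<infinity>"
proof -
  have "h 0 - ereal (\<Sum>i\<in>UNIV. 0 $ i * w $ i) \<le> conj_fun h w" by (rule cf_ge)
  then have "0 \<le> conj_fun h w" using assms by simp
  then show ?thesis by auto
qed

lemma axis_dot: "(\<Sum>j\<in>UNIV. (axis i s :: real^'n) $ j * w $ j) = s * w $ i"
proof -
  have e: "(\<lambda>j. (axis i s :: real^'n) $ j * w $ j) = (\<lambda>j. if j = i then s * w $ i else 0)"
    by (auto simp: axis_def)
  show ?thesis by (subst e) simp
qed

lemma nonneg_axis: "0 \<le> s \<Longrightarrow> nonneg (axis i s)"
  unfolding nonneg_def axis_def by simp

lemma cf_nn:
  assumes h: "\<And>t. nonneg t \<Longrightarrow> 0 \<le> h t" and fin: "conj_fun h w \<noteq> \<infinity>"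
  shows "nonneg w"
proof (rule ccontr)
  assume "\<not> nonneg w"
  then obtain i where wi: "w $ i < 0" unfolding nonneg_def by (auto simp: not_le)
  have "conj_fun h w = \<infinity>"
  proof (rule ereal_top)
    fix B
    define s where "s = max 0 (B / (- w $ i))"
    have s0: "0 \<le> s" unfolding s_def by simp
    have sB: "B \<le> s * (- w $ i)"
    proof -
      have "B / (- w $ i) \<le> s" unfolding s_def by simp
      then have "B / (- w $ i) * (- w $ i) \<le> s * (- w $ i)" using wi by (intro mult_right_mono) auto
      then show ?thesis using wi by simp
    qed
    have ge: "h (axis i s) - ereal (s * w $ i) \<le> conj_fun h w"
      using cf_ge[of h "axis i s" w] unfolding axis_dot .
    have h0: "0 \<le> h (axis i s)" using h nonneg_axis s0 by blast
    have "ereal B \<le> h (axis i s) - ereal (s * w $ i)"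
    proof (cases "h (axis i s)")
      case (real q)
      then have "0 \<le> q" using h0 by simp
      then show ?thesis using real sB by simp
    next
      case PInf then show ?thesis by simp
    next
      case MInf then show ?thesis using h0 by simp
    qed
    then show "ereal B \<le> conj_fun h w" using ge by (rule order_trans)
  qed
  then show False using fin by simp
qed

lemma dot_comb: "(\<Sum>i\<in>UNIV. t $ i * ((1-u) *\<^sub>R x + u *\<^sub>R y) $ i) =
   (1-u) * (\<Sum>i\<in>UNIV. t $ i * x $ i) + u * (\<Sum>i\<in>UNIV. t $ i * y $ i)"
proof -
  have "t $ i * ((1-u) *\<^sub>R x + u *\<^sub>R y) $ i = (1-u) * (t $ i * x $ i) + u * (t $ i * y $ i)" for i
    by (simp add: algebra_simps)
  then show ?thesis by (simp add: sum.distrib sum_distrib_left)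
qed

lemma cf_conv:
  assumes h: "\<And>t. h t \<noteq> \<infinity>" and x: "conj_fun h x \<le> ereal a" and y: "conj_fun h y \<le> ereal b"
    and u: "0 \<le> u" "u \<le> 1"
  shows "conj_fun h ((1-u) *\<^sub>R x + u *\<^sub>R y) \<le> ereal ((1-u)*a + u*b)"
  unfolding conj_fun_def
proof (rule SUP_least)
  fix t
  show "h t - ereal (\<Sum>i\<in>UNIV. t $ i * ((1-u) *\<^sub>R x + u *\<^sub>R y) $ i) \<le> ereal ((1-u)*a + u*b)"
  proof (cases "h t")
    case (real q)
    have "h t - ereal (\<Sum>i\<in>UNIV. t $ i * x $ i) \<le> ereal a" using cf_ge[of h t x] x by (rule order_trans)
    then have qa: "q - (\<Sum>i\<in>UNIV. t $ i * x $ i) \<le> a" using real by simp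
    have "h t - ereal (\<Sum>i\<in>UNIV. t $ i * y $ i) \<le> ereal b" using cf_ge[of h t y] y by (rule order_trans)
    then have qb: "q - (\<Sum>i\<in>UNIV. t $ i * y $ i) \<le> b" using real by simp
    have "(1-u) * (q - (\<Sum>i\<in>UNIV. t $ i * x $ i)) \<le> (1-u) * a" using qa u by (intro mult_left_mono) auto
    moreover have "u * (q - (\<Sum>i\<in>UNIV. t $ i * y $ i)) \<le> u * b" using qb u by (intro mult_left_mono) auto
    ultimately have "q - ((1-u) * (\<Sum>i\<in>UNIV. t $ i * x $ i) + u * (\<Sum>i\<in>UNIV. t $ i * y $ i)) \<le> (1-u)*a + u*b"
      by (simp add: algebra_simps)
    then show ?thesis using real unfolding dot_comb by simp
  next
    case PInf then show ?thesis using h by simp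
  next
    case MInf then show ?thesis by simp
  qed
qed

lemma fk_neg: "\<not> nonneg t \<Longrightarrow> fk tail head c o' d t = -\<infinity>"
  unfolding fk_def by simp

lemma fk_upper:
  assumes "nonneg t" "x \<in> flow_set tail head (supply_vec o' d)"
  shows "fk tail head c o' d t \<le> ereal ((\<Sum>a\<in>UNIV. c a * x a) + (\<Sum>i\<in>UNIV. t $ i * x (Inl i)))"
  unfolding fk_def using assms by (auto intro!: Inf_lower)

lemma fk_lower:
  assumes c: "\<forall>a. 0 \<le> c a" and t: "nonneg t"
    and lb: "\<And>x. x \<in> flow_set tail head (supply_vec o' d) \<Longrightarrow> \<delta> \<le> (\<Sum>a\<in>UNIV. c a * x a) + (\<Sum>i\<in>UNIV. t $ i * x (Inl i))"
  shows "ereal \<delta> \<le> fk tail head c o' d t"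
  unfolding fk_def using t lb by (auto intro!: Inf_greatest)

lemma fk_ge0:
  assumes c: "\<forall>a. 0 \<le> c a" and t: "nonneg t"
  shows "0 \<le> fk tail head c o' d t"
proof -
  have "ereal 0 \<le> fk tail head c o' d t"
  proof (rule fk_lower[OF c t])
    fix x assume "x \<in> flow_set tail head (supply_vec o' d)"
    then have x: "\<forall>a. 0 \<le> x a" unfolding flow_set_def by simp
    show "0 \<le> (\<Sum>a\<in>UNIV. c a * x a) + (\<Sum>i\<in>UNIV. t $ i * x (Inl i))"
      using c x t unfolding nonneg_def by (intro add_nonneg_nonneg sum_nonneg mult_nonneg_nonneg) auto
  qed
  then show ?thesis by (simp add: zero_ereal_def)
qed

lemma fk_real:
  assumes c: "\<forall>a. 0 \<le> c a" and t: "nonneg t" and x: "x \<in> flow_set tail head (supply_vec o' d)"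
  shows "fk tail head c o' d t = ereal (real_of_ereal (fk tail head c o' d t))"
  using fk_ge0[OF c t, of tail head o' d] fk_upper[OF t x, of c]
  by (cases "fk tail head c o' d t") auto


lemma cone_fin:
  fixes gen :: "'j::finite \<Rightarrow> 'a::real_vector"
  shows "convex_cone hull (range gen) = {\<Sum>j\<in>UNIV. \<mu> j *\<^sub>R gen j | \<mu>. \<forall>j. 0 \<le> \<mu> j}" (is "_ = ?S")
proof
  show "convex_cone hull (range gen) \<subseteq> ?S"
  proof (rule hull_minimal)
    show "range gen \<subseteq> ?S"
    proof
      fix y assume "y \<in> range gen"
      then obtain j0 where y: "y = gen j0" by auto
      have e: "(\<lambda>j. (if j = j0 then 1 else 0) *\<^sub>R gen j) = (\<lambda>j. if j = j0 then gen j else 0)" by auto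
      have "(\<Sum>j\<in>UNIV. (if j = j0 then 1 else 0) *\<^sub>R gen j) = gen j0" by (subst e) simp
      then show "y \<in> ?S" using y by (intro CollectI exI[of _ "\<lambda>j. if j = j0 then 1 else 0"]) auto
    qed
    show "convex_cone ?S"
      unfolding convex_cone_iff
    proof (intro conjI ballI allI impI)
      show "0 \<in> ?S" by (intro CollectI exI[of _ "\<lambda>j. 0"]) simp
      fix x y assume x: "x \<in> ?S" and y: "y \<in> ?S"
      then obtain \<mu> \<nu> where "x = (\<Sum>j\<in>UNIV. \<mu> j *\<^sub>R gen j)" "\<forall>j. 0 \<le> \<mu> j"
          "y = (\<Sum>j\<in>UNIV. \<nu> j *\<^sub>R gen j)" "\<forall>j. 0 \<le> \<nu> j" by blast
      then show "x + y \<in> ?S"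
        by (intro CollectI exI[of _ "\<lambda>j. \<mu> j + \<nu> j"]) (simp add: scaleR_add_left sum.distrib add_nonneg_nonneg)
    next
      fix x and c :: real assume x: "x \<in> ?S" and c: "0 \<le> c"
      then obtain \<mu> where "x = (\<Sum>j\<in>UNIV. \<mu> j *\<^sub>R gen j)" "\<forall>j. 0 \<le> \<mu> j" by blast
      then show "c *\<^sub>R x \<in> ?S" using c
        by (intro CollectI exI[of _ "\<lambda>j. c * \<mu> j"]) (simp add: scaleR_sum_right)
    qed
  qed
  show "?S \<subseteq> convex_cone hull (range gen)"
  proof
    fix y assume "y \<in> ?S"
    then obtain \<mu> where y: "y = (\<Sum>j\<in>UNIV. \<mu> j *\<^sub>R gen j)" and mu: "\<forall>j. 0 \<le> \<mu> j" by blast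
    have "(\<Sum>j\<in>A. \<mu> j *\<^sub>R gen j) \<in> convex_cone hull (range gen)" if "finite A" for A
      using that
    proof (induction A rule: finite_induct)
      case empty then show ?case by (simp add: convex_cone_hull_contains_0)
    next
      case (insert j A)
      then show ?case using mu
        by (simp add: convex_cone_hull_add convex_cone_hull_mul hull_inc)
    qed
    then show "y \<in> convex_cone hull (range gen)" using y by simp
  qed
qed

lemma sumJ:
  "(\<Sum>j\<in>(UNIV::(('a::finite\<times>'b::finite)+('c::finite+unit)) set). h j)
     = (\<Sum>a\<in>UNIV. \<Sum>b\<in>UNIV. h (Inl (a,b))) + (\<Sum>c\<in>UNIV. h (Inr (Inl c))) + h (Inr (Inr ()))"
proof -
  have 1: "(\<Sum>j\<in>(UNIV::(('a\<times>'b)+('c+unit)) set). h j) = (\<Sum>p\<in>UNIV. h (Inl p)) + (\<Sum>q\<in>UNIV. h (Inr q))"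
    using sum.Plus[of "UNIV::('a\<times>'b) set" "UNIV::('c+unit) set" h] by (simp add: comp_def)
  have 2: "(\<Sum>q\<in>(UNIV::('c+unit) set). h (Inr q)) = (\<Sum>c\<in>UNIV. h (Inr (Inl c))) + h (Inr (Inr ()))"
  proof -
    have "(\<Sum>q\<in>(UNIV::('c+unit) set). h (Inr q)) = (\<Sum>c\<in>UNIV. h (Inr (Inl c))) + (\<Sum>u\<in>(UNIV::unit set). h (Inr (Inr u)))"
      using sum.Plus[of "UNIV::'c set" "UNIV::unit set" "\<lambda>q. h (Inr q)"] by (simp add: comp_def)
    then show ?thesis by (simp add: UNIV_unit)
  qed
  have 3: "(\<Sum>p\<in>(UNIV::('a\<times>'b) set). h (Inl p)) = (\<Sum>a\<in>UNIV. \<Sum>b\<in>UNIV. h (Inl (a,b)))"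
    by (simp add: sum.cartesian_product UNIV_Times_UNIV[symmetric] del: UNIV_Times_UNIV)
  show ?thesis using 1 2 3 by (simp add: add.assoc)
qed

lemma cone3:
  fixes g1 :: "'a::finite \<Rightarrow> 'b::finite \<Rightarrow> 'e::euclidean_space" and g2 :: "'c::finite \<Rightarrow> 'e" and g3 :: 'e
  defines "S \<equiv> {(\<Sum>a\<in>UNIV. \<Sum>b\<in>UNIV. \<mu>1 a b *\<^sub>R g1 a b) + (\<Sum>c\<in>UNIV. \<mu>2 c *\<^sub>R g2 c) + \<mu>3 *\<^sub>R g3
                 | \<mu>1 \<mu>2 \<mu>3. (\<forall>a b. 0 \<le> \<mu>1 a b) \<and> (\<forall>c. 0 \<le> \<mu>2 c) \<and> 0 \<le> \<mu>3}"
  shows "closed S \<and> convex S"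
proof -
  define gen :: "('a\<times>'b)+('c+unit) \<Rightarrow> 'e" where
    "gen = case_sum (\<lambda>(a,b). g1 a b) (case_sum g2 (\<lambda>_. g3))"
  have "S = convex_cone hull (range gen)"
    unfolding cone_fin
  proof (intro equalityI subsetI)
    fix y assume "y \<in> S"
    then obtain \<mu>1 \<mu>2 \<mu>3 where y: "y = (\<Sum>a\<in>UNIV. \<Sum>b\<in>UNIV. \<mu>1 a b *\<^sub>R g1 a b) + (\<Sum>c\<in>UNIV. \<mu>2 c *\<^sub>R g2 c) + \<mu>3 *\<^sub>R g3"
      and m: "\<forall>a b. 0 \<le> \<mu>1 a b" "\<forall>c. 0 \<le> \<mu>2 c" "0 \<le> \<mu>3" unfolding S_def by blast
    define \<mu> :: "('a\<times>'b)+('c+unit) \<Rightarrow> real" where "\<mu> = case_sum (\<lambda>(a,b). \<mu>1 a b) (case_sum \<mu>2 (\<lambda>_. \<mu>3))"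
    have "y = (\<Sum>j\<in>UNIV. \<mu> j *\<^sub>R gen j)" unfolding sumJ y \<mu>_def gen_def by simp
    moreover have "\<forall>j. 0 \<le> \<mu> j" using m unfolding \<mu>_def by (auto split: sum.splits)
    ultimately show "y \<in> {\<Sum>j\<in>UNIV. \<mu> j *\<^sub>R gen j | \<mu>. \<forall>j. 0 \<le> \<mu> j}" by blast
  next
    fix y assume "y \<in> {\<Sum>j\<in>UNIV. \<mu> j *\<^sub>R gen j | \<mu>. \<forall>j. 0 \<le> \<mu> j}"
    then obtain \<mu> where y: "y = (\<Sum>j\<in>UNIV. \<mu> j *\<^sub>R gen j)" and m: "\<forall>j. 0 \<le> \<mu> j" by blast
    have "y = (\<Sum>a\<in>UNIV. \<Sum>b\<in>UNIV. \<mu> (Inl (a,b)) *\<^sub>R g1 a b) + (\<Sum>c\<in>UNIV. \<mu> (Inr (Inl c)) *\<^sub>R g2 c) + \<mu> (Inr (Inr ())) *\<^sub>R g3"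
      unfolding y sumJ gen_def by simp
    then show "y \<in> S" unfolding S_def using m
      by (intro CollectI exI[of _ "\<lambda>a b. \<mu> (Inl (a,b))"] exI[of _ "\<lambda>c. \<mu> (Inr (Inl c))"] exI[of _ "\<mu> (Inr (Inr ()))"]) auto
  qed
  then show ?thesis
    by (simp add: closed_convex_cone_hull convex_convex_cone_hull)
qed


lemma flowN:
  fixes x :: "'a::finite \<Rightarrow> real"
  shows "(\<Sum>a\<in>UNIV. x a * ((if tail a = v then 1 else 0) - (if head a = v then 1 else 0)))
        = (\<Sum>a\<in>{a. tail a = v}. x a) - (\<Sum>a\<in>{a. head a = v}. x a)"
proof -
  have e: "(\<Sum>a\<in>UNIV. x a * (if P a then 1 else 0)) = (\<Sum>a\<in>{a. P a}. x a)" for P :: "'a \<Rightarrow> bool"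
  proof -
    have "(\<Sum>a\<in>UNIV. x a * (if P a then 1 else 0)) = (\<Sum>a\<in>UNIV. if P a then x a else 0)"
      by (rule sum.cong) auto
    then show ?thesis using sum.inter_filter[of UNIV x P] by simp
  qed
  show ?thesis by (simp add: right_diff_distrib sum_subtractf e)
qed

locale net =
  fixes tail head :: "('t::finite + 'u::finite) \<Rightarrow> 'v::finite"
    and c :: "('t + 'u) \<Rightarrow> real" and K :: "'k set" and orig dest :: "'k \<Rightarrow> 'v"
  assumes c_nonneg: "\<forall>a. 0 \<le> c a" and K_finite: "finite K"
begin

definition cost :: "(('t+'u) \<Rightarrow> real) \<Rightarrow> real" where "cost x = (\<Sum>a\<in>UNIV. c a * x a)"
definition Kod :: "'v \<times> 'v \<Rightarrow> 'k set" where "Kod od = {k\<in>K. (orig k, dest k) = od}"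
definition m :: "'v \<times> 'v \<Rightarrow> real" where "m od = real (card (Kod od))"

definition Cset :: "((real^'t) \<times> real) set" where
 "Cset = {(z, r) | z r. \<exists>x. (\<forall>k\<in>K. x k \<in> flow_set tail head (supply_vec (orig k) (dest k)))
             \<and> (\<forall>i. (\<Sum>k\<in>K. x k (Inl i)) \<le> z $ i) \<and> (\<Sum>k\<in>K. cost (x k)) \<le> r}"

definition g1 :: "'v \<times> 'v \<Rightarrow> ('t+'u) \<Rightarrow> ((real^'t) \<times> real) \<times> (real^(('v\<times>'v)\<times>'v))" where
  "g1 od a = (((\<chi> i. if a = Inl i then 1 else 0), c a),
     (\<chi> q. if fst q = od then (if tail a = snd q then 1 else 0) - (if head a = snd q then 1 else 0) else 0))"
definition g2 :: "'t \<Rightarrow> ((real^'t) \<times> real) \<times> (real^(('v\<times>'v)\<times>'v))" where "g2 i = ((axis i 1, 0), 0)"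
definition g3 :: "((real^'t) \<times> real) \<times> (real^(('v\<times>'v)\<times>'v))" where "g3 = ((0, 1), 0)"
definition beta :: "real^(('v\<times>'v)\<times>'v)" where
  "beta = (\<chi> q. m (fst q) * supply_vec (fst (fst q)) (snd (fst q)) (snd q))"

definition Mof where "Mof \<mu>1 \<mu>2 \<mu>3 = (\<Sum>od\<in>UNIV. \<Sum>a\<in>UNIV. \<mu>1 od a *\<^sub>R g1 od a) + (\<Sum>i\<in>UNIV. \<mu>2 i *\<^sub>R g2 i) + \<mu>3 *\<^sub>R g3"

lemma Mof_1: "fst (fst (Mof \<mu>1 \<mu>2 \<mu>3)) $ i = (\<Sum>od\<in>UNIV. \<mu>1 od (Inl i)) + \<mu>2 i"
proof -
  have e1: "(\<Sum>a\<in>UNIV. \<mu>1 od a * (if a = Inl i then 1 else 0)) = \<mu>1 od (Inl i)" for od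
  proof -
    have e: "(\<lambda>a. \<mu>1 od a * (if a = Inl i then 1 else 0)) = (\<lambda>a. if a = Inl i then \<mu>1 od (Inl i) else 0)" by auto
    show ?thesis by (subst e) simp
  qed
  have e2: "(\<Sum>j\<in>UNIV. \<mu>2 j * (axis j 1 :: real^'t) $ i) = \<mu>2 i"
  proof -
    have e: "(\<lambda>j. \<mu>2 j * (axis j 1 :: real^'t) $ i) = (\<lambda>j. if j = i then \<mu>2 i else 0)" by (auto simp: axis_def)
    show ?thesis by (subst e) simp
  qed
  show ?thesis unfolding Mof_def g1_def g2_def g3_def by (simp add: fst_sum e1 e2)
qed

lemma Mof_2: "snd (fst (Mof \<mu>1 \<mu>2 \<mu>3)) = (\<Sum>od\<in>UNIV. \<Sum>a\<in>UNIV. \<mu>1 od a * c a) + \<mu>3"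
  unfolding Mof_def g1_def g2_def g3_def by (simp add: fst_sum snd_sum)

lemma Mof_3: "snd (Mof \<mu>1 \<mu>2 \<mu>3) $ q =
   (\<Sum>a\<in>UNIV. \<mu>1 (fst q) a * ((if tail a = snd q then 1 else 0) - (if head a = snd q then 1 else 0)))"
proof -
  have "snd (Mof \<mu>1 \<mu>2 \<mu>3) $ q = (\<Sum>od\<in>UNIV. \<Sum>a\<in>UNIV. \<mu>1 od a * (if fst q = od then (if tail a = snd q then 1 else 0) - (if head a = snd q then 1 else 0) else 0))"
    unfolding Mof_def g1_def g2_def g3_def by (simp add: snd_sum)
  also have "\<dots> = (\<Sum>od\<in>UNIV. if od = fst q then (\<Sum>a\<in>UNIV. \<mu>1 od a * ((if tail a = snd q then 1 else 0) - (if head a = snd q then 1 else 0))) else 0)"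
    by (rule sum.cong) auto
  also have "\<dots> = (\<Sum>a\<in>UNIV. \<mu>1 (fst q) a * ((if tail a = snd q then 1 else 0) - (if head a = snd q then 1 else 0)))"
    by simp
  finally show ?thesis .
qed

definition Sset where
  "Sset = {Mof \<mu>1 \<mu>2 \<mu>3 | \<mu>1 \<mu>2 \<mu>3. (\<forall>a b. 0 \<le> \<mu>1 a b) \<and> (\<forall>c. 0 \<le> \<mu>2 c) \<and> 0 \<le> \<mu>3}"

lemma Sset_closed_convex: "closed Sset \<and> convex Sset"
  unfolding Sset_def Mof_def by (rule cone3)

lemma Kod_group: "(\<Sum>od\<in>UNIV. \<Sum>k\<in>Kod od. h k) = (\<Sum>k\<in>K. h k)"
  unfolding Kod_def using sum.group[of K UNIV "\<lambda>k. (orig k, dest k)" h] K_finite by simp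

lemma Kod_sub: "Kod od \<subseteq> K" unfolding Kod_def by auto

lemma m_pos: "k \<in> K \<Longrightarrow> 0 < m (orig k, dest k)"
proof -
  assume k: "k \<in> K"
  have "k \<in> Kod (orig k, dest k)" using k unfolding Kod_def by simp
  moreover have "finite (Kod (orig k, dest k))" using K_finite Kod_sub by (rule finite_subset[rotated])
  ultimately have "card (Kod (orig k, dest k)) > 0" by (auto simp: card_gt_0_iff)
  then show ?thesis unfolding m_def by simp
qed

lemma avg_le:
  assumes h: "\<forall>od. 0 \<le> h od"
  shows "(\<Sum>k\<in>K. h (orig k, dest k) / m (orig k, dest k)) \<le> (\<Sum>od\<in>UNIV. h od)"
proof -
  have "(\<Sum>k\<in>K. h (orig k, dest k) / m (orig k, dest k)) = (\<Sum>od\<in>UNIV. \<Sum>k\<in>Kod od. h (orig k, dest k) / m (orig k, dest k))"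
    by (rule Kod_group[symmetric])
  also have "\<dots> = (\<Sum>od\<in>UNIV. \<Sum>k\<in>Kod od. h od / m od)"
    by (intro sum.cong refl) (auto simp: Kod_def)
  also have "\<dots> = (\<Sum>od\<in>UNIV. m od * (h od / m od))" by (simp add: m_def)
  also have "\<dots> \<le> (\<Sum>od\<in>UNIV. h od)"
  proof (rule sum_mono)
    fix od show "m od * (h od / m od) \<le> h od" using h[rule_format, of od] by (cases "m od = 0") auto
  qed
  finally show ?thesis .
qed

lemma Cset_eq: "Cset = {p. (p, beta) \<in> Sset}"
proof (intro equalityI subsetI)
  fix p assume "p \<in> Cset"
  then obtain z r x where p: "p = (z, r)" and x: "\<forall>k\<in>K. x k \<in> flow_set tail head (supply_vec (orig k) (dest k))"
    and zi: "\<forall>i. (\<Sum>k\<in>K. x k (Inl i)) \<le> z $ i" and rc: "(\<Sum>k\<in>K. cost (x k)) \<le> r"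
    unfolding Cset_def by blast
  have xnn: "0 \<le> x k a" if "k \<in> K" for k a using x that unfolding flow_set_def by auto
  have xnn': "0 \<le> x k a" if "k \<in> Kod od" for k a od using xnn Kod_sub that by blast
  define \<mu>1 where "\<mu>1 od a = (\<Sum>k\<in>Kod od. x k a)" for od a
  define \<mu>2 where "\<mu>2 i = z $ i - (\<Sum>k\<in>K. x k (Inl i))" for i
  define \<mu>3 where "\<mu>3 = r - (\<Sum>k\<in>K. cost (x k))"
  have nn: "(\<forall>a b. 0 \<le> \<mu>1 a b) \<and> (\<forall>c. 0 \<le> \<mu>2 c) \<and> 0 \<le> \<mu>3"
  proof (intro conjI allI)
    fix od a show "0 \<le> \<mu>1 od a" unfolding \<mu>1_def using xnn' by (intro sum_nonneg) blast
  next
    fix i show "0 \<le> \<mu>2 i" unfolding \<mu>2_def using zi by simp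
  next
    show "0 \<le> \<mu>3" unfolding \<mu>3_def using rc by simp
  qed
  have c1: "fst (fst (Mof \<mu>1 \<mu>2 \<mu>3)) = z"
  proof -
    have "fst (fst (Mof \<mu>1 \<mu>2 \<mu>3)) $ i = z $ i" for i
      unfolding Mof_1 \<mu>1_def \<mu>2_def Kod_group by simp
    then show ?thesis by (simp add: vec_eq_iff)
  qed
  have c2: "snd (fst (Mof \<mu>1 \<mu>2 \<mu>3)) = r"
  proof -
    have e: "(\<Sum>a\<in>UNIV. \<mu>1 od a * c a) = (\<Sum>k\<in>Kod od. cost (x k))" for od
    proof -
      have "(\<Sum>a\<in>UNIV. \<mu>1 od a * c a) = (\<Sum>a\<in>UNIV. c a * \<mu>1 od a)"
        by (rule sum.cong[OF refl]) (rule mult.commute)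
      also have "\<dots> = (\<Sum>a\<in>UNIV. \<Sum>k\<in>Kod od. c a * x k a)"
        unfolding \<mu>1_def by (simp add: sum_distrib_left)
      also have "\<dots> = (\<Sum>k\<in>Kod od. \<Sum>a\<in>UNIV. c a * x k a)" by (rule sum.swap)
      finally show ?thesis unfolding cost_def .
    qed
    have "(\<Sum>od\<in>UNIV. \<Sum>a\<in>UNIV. \<mu>1 od a * c a) = (\<Sum>od\<in>UNIV. \<Sum>k\<in>Kod od. cost (x k))"
      unfolding e ..
    also have "\<dots> = (\<Sum>k\<in>K. cost (x k))" by (rule Kod_group)
    finally show ?thesis unfolding Mof_2 \<mu>3_def by simp
  qed
  have c3: "snd (Mof \<mu>1 \<mu>2 \<mu>3) = beta"
  proof -
    have "snd (Mof \<mu>1 \<mu>2 \<mu>3) $ q = beta $ q" for q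
    proof -
      obtain od v where q: "q = (od, v)" by (cases q)
      have "snd (Mof \<mu>1 \<mu>2 \<mu>3) $ q = (\<Sum>a\<in>UNIV. \<mu>1 od a * ((if tail a = v then 1 else 0) - (if head a = v then 1 else 0)))"
        unfolding Mof_3 q by simp
      also have "\<dots> = (\<Sum>k\<in>Kod od. \<Sum>a\<in>UNIV. x k a * ((if tail a = v then 1 else 0) - (if head a = v then 1 else 0)))"
        unfolding \<mu>1_def sum_distrib_right by (rule sum.swap)
      also have "\<dots> = (\<Sum>k\<in>Kod od. supply_vec (fst od) (snd od) v)"
      proof (rule sum.cong[OF refl])
        fix k assume k: "k \<in> Kod od"
        then have kK: "k \<in> K" and kod: "(orig k, dest k) = od" unfolding Kod_def by auto
        show "(\<Sum>a\<in>UNIV. x k a * ((if tail a = v then 1 else 0) - (if head a = v then 1 else 0))) = supply_vec (fst od) (snd od) v"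
          unfolding flowN using x kK kod unfolding flow_set_def by auto
      qed
      also have "\<dots> = beta $ q" unfolding beta_def q m_def by simp
      finally show ?thesis .
    qed
    then show ?thesis by (simp add: vec_eq_iff)
  qed
  have Meq: "Mof \<mu>1 \<mu>2 \<mu>3 = (p, beta)" using c1 c2 c3 p by (simp add: prod_eq_iff)
  have "(p, beta) \<in> Sset" unfolding Sset_def
    by (rule CollectI, rule exI[of _ \<mu>1], rule exI[of _ \<mu>2], rule exI[of _ \<mu>3]) (use Meq nn in simp)
  then show "p \<in> {p. (p, beta) \<in> Sset}" by simp
next
  fix p assume "p \<in> {p. (p, beta) \<in> Sset}"
  then obtain \<mu>1 \<mu>2 \<mu>3 where M: "Mof \<mu>1 \<mu>2 \<mu>3 = (p, beta)"
    and nn: "\<forall>a b. 0 \<le> \<mu>1 a b" "\<forall>c. 0 \<le> \<mu>2 c" "0 \<le> \<mu>3" unfolding Sset_def by auto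
  obtain z r where p: "p = (z, r)" by (cases p)
  define x where "x k a = \<mu>1 (orig k, dest k) a / m (orig k, dest k)" for k a
  have xin: "x k \<in> flow_set tail head (supply_vec (orig k) (dest k))" if k: "k \<in> K" for k
    unfolding flow_set_def
  proof (intro CollectI conjI allI)
    fix a show "0 \<le> x k a" unfolding x_def using nn m_pos[OF k] by simp
  next
    fix v
    have "(\<Sum>a\<in>{a. tail a = v}. x k a) - (\<Sum>a\<in>{a. head a = v}. x k a)
       = (\<Sum>a\<in>UNIV. x k a * ((if tail a = v then 1 else 0) - (if head a = v then 1 else 0)))"
      by (rule flowN[symmetric])
    also have "\<dots> = (\<Sum>a\<in>UNIV. \<mu>1 (orig k, dest k) a * ((if tail a = v then 1 else 0) - (if head a = v then 1 else 0))) / m (orig k, dest k)"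
      unfolding x_def by (simp add: sum_divide_distrib)
    also have "\<dots> = snd (Mof \<mu>1 \<mu>2 \<mu>3) $ ((orig k, dest k), v) / m (orig k, dest k)"
      unfolding Mof_3 by simp
    also have "\<dots> = supply_vec (orig k) (dest k) v"
      using M m_pos[OF k] unfolding beta_def by simp
    finally show "(\<Sum>a\<in>{a. tail a = v}. x k a) - (\<Sum>a\<in>{a. head a = v}. x k a) = supply_vec (orig k) (dest k) v" .
  qed
  have zi: "(\<Sum>k\<in>K. x k (Inl i)) \<le> z $ i" for i
  proof -
    have "(\<Sum>k\<in>K. x k (Inl i)) \<le> (\<Sum>od\<in>UNIV. \<mu>1 od (Inl i))"
      unfolding x_def using avg_le[of "\<lambda>od. \<mu>1 od (Inl i)"] nn by simp
    also have "\<dots> \<le> fst (fst (Mof \<mu>1 \<mu>2 \<mu>3)) $ i" unfolding Mof_1 using nn by simp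
    finally show ?thesis using M p by simp
  qed
  have rc: "(\<Sum>k\<in>K. cost (x k)) \<le> r"
  proof -
    have "(\<Sum>k\<in>K. cost (x k)) = (\<Sum>k\<in>K. (\<Sum>a\<in>UNIV. \<mu>1 (orig k, dest k) a * c a) / m (orig k, dest k))"
      unfolding cost_def x_def sum_divide_distrib by (intro sum.cong refl) (simp add: mult.commute)
    also have "\<dots> \<le> (\<Sum>od\<in>UNIV. \<Sum>a\<in>UNIV. \<mu>1 od a * c a)"
      using avg_le[of "\<lambda>od. \<Sum>a\<in>UNIV. \<mu>1 od a * c a"] nn c_nonneg by (simp add: sum_nonneg)
    also have "\<dots> \<le> snd (fst (Mof \<mu>1 \<mu>2 \<mu>3))" unfolding Mof_2 using nn by simp
    finally show ?thesis using M p by simp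
  qed
  show "p \<in> Cset" unfolding Cset_def p using xin zi rc by blast
qed

lemma Cset_closed: "closed Cset"
proof -
  have "Cset = (\<lambda>p. (p, beta)) -` Sset" unfolding Cset_eq by auto
  moreover have "closed ((\<lambda>p. (p, beta)) -` Sset)"
    using Sset_closed_convex by (intro continuous_closed_vimage) (auto intro: continuous_intros)
  ultimately show ?thesis by simp
qed

lemma Cset_convex: "convex Cset"
proof -
  have cs: "convex Sset" using Sset_closed_convex by simp
  show ?thesis unfolding convex_def
  proof (intro ballI allI impI)
    fix x y :: "(real^'t) \<times> real" and u v :: real
    assume x: "x \<in> Cset" and y: "y \<in> Cset" and uv: "0 \<le> u" "0 \<le> v" "u + v = 1"
    have "(x, beta) \<in> Sset" "(y, beta) \<in> Sset" using x y unfolding Cset_eq by auto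
    then have "u *\<^sub>R (x, beta) + v *\<^sub>R (y, beta) \<in> Sset" using cs uv unfolding convex_def by blast
    moreover have "u *\<^sub>R (x, beta) + v *\<^sub>R (y, beta) = (u *\<^sub>R x + v *\<^sub>R y, beta)"
      using uv(3) by (simp add: scaleR_add_left[symmetric])
    ultimately show "u *\<^sub>R x + v *\<^sub>R y \<in> Cset" unfolding Cset_eq by simp
  qed
qed

end


context net begin

lemma cost_nonneg: "x \<in> flow_set tail head b \<Longrightarrow> 0 \<le> cost x"
  unfolding cost_def flow_set_def using c_nonneg by (auto intro!: sum_nonneg)

lemma duality:
  assumes x0: "\<forall>k\<in>K. x0 k \<in> flow_set tail head (supply_vec (orig k) (dest k)) \<and> (\<forall>i. x0 k (Inl i) = 0)"
    and Kne: "K \<noteq> {}" and v: "nonneg v"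
  shows "\<exists>x. (\<forall>k\<in>K. x k \<in> flow_set tail head (supply_vec (orig k) (dest k))) \<and> (\<forall>i. (\<Sum>k\<in>K. x k (Inl i)) \<le> v $ i)
           \<and> ereal (\<Sum>k\<in>K. cost (x k)) \<le> conj_fun (\<lambda>t. \<Sum>k\<in>K. fk tail head c (orig k) (dest k) t) v"
proof -
  define F where "F t = (\<Sum>k\<in>K. fk tail head c (orig k) (dest k) t)" for t
  define r0 where "r0 = (\<Sum>k\<in>K. cost (x0 k))"
  have inC: "(z, r) \<in> Cset" if "nonneg z" "r0 \<le> r" for z r
  proof -
    have "\<forall>i. (\<Sum>k\<in>K. x0 k (Inl i)) \<le> z $ i" using x0 that(1) unfolding nonneg_def by simp
    then show ?thesis unfolding Cset_def using x0 that(2) unfolding r0_def by blast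
  qed
  have Cpos: "0 \<le> r" if C: "(z,r) \<in> Cset" for z r
  proof -
    obtain x where "\<forall>k\<in>K. x k \<in> flow_set tail head (supply_vec (orig k) (dest k))" "(\<Sum>k\<in>K. cost (x k)) \<le> r"
      using C unfolding Cset_def by blast
    moreover have "0 \<le> (\<Sum>k\<in>K. cost (x k))" using calculation(1) cost_nonneg by (intro sum_nonneg) blast
    ultimately show ?thesis by linarith
  qed
  define R where "R = {r. (v, r) \<in> Cset}"
  have Rne: "r0 \<in> R" using inC[OF v order_refl] unfolding R_def by simp
  have Rbdd: "bdd_below R" unfolding R_def by (rule bdd_belowI[of _ 0]) (use Cpos in blast)
  have Rcl: "closed R"
  proof -
    have "R = (\<lambda>r. (v, r)) -` Cset" unfolding R_def by auto
    moreover have "closed ((\<lambda>r. (v, r)) -` Cset)"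
      using Cset_closed by (intro continuous_closed_vimage) (auto intro: continuous_intros)
    ultimately show ?thesis by simp
  qed
  define mm where "mm = Inf R"
  have "mm \<in> R" unfolding mm_def using closed_contains_Inf[of R] Rne Rbdd Rcl by auto
  then obtain x where x: "\<forall>k\<in>K. x k \<in> flow_set tail head (supply_vec (orig k) (dest k))"
    "\<forall>i. (\<Sum>k\<in>K. x k (Inl i)) \<le> v $ i" "(\<Sum>k\<in>K. cost (x k)) \<le> mm"
    unfolding R_def Cset_def by blast
  have "ereal mm \<le> conj_fun F v"
  proof (rule ccontr)
    assume "\<not> ereal mm \<le> conj_fun F v"
    then have lt: "conj_fun F v < ereal mm" by simp
    have F0: "0 \<le> F 0" unfolding F_def
      by (intro sum_nonneg fk_ge0[OF c_nonneg]) (simp add: nonneg_def)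
    have "conj_fun F v \<noteq> -\<infinity>" by (rule cf_minf[of F, OF F0])
    then obtain g0 where g0: "conj_fun F v = ereal g0" using lt by (cases "conj_fun F v") auto
    define \<gamma> where "\<gamma> = (g0 + mm) / 2"
    have g0lt: "g0 < mm" using lt g0 by simp
    have \<gamma>: "g0 < \<gamma>" "\<gamma> < mm" using g0lt unfolding \<gamma>_def by auto
    have notin: "(v, \<gamma>) \<notin> Cset"
    proof
      assume "(v, \<gamma>) \<in> Cset"
      then have "\<gamma> \<in> R" unfolding R_def by simp
      then have "mm \<le> \<gamma>" unfolding mm_def using Rbdd by (rule cInf_lower)
      then show False using \<gamma> by simp
    qed
    obtain a b where ab: "inner a (v, \<gamma>) < b" "\<forall>p\<in>Cset. b < inner a p"
      using separating_hyperplane_closed_point[OF Cset_convex Cset_closed notin] by blast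
    obtain a1 \<beta> where a: "a = (a1, \<beta>)" by (cases a)
    define dt where "dt y z = (\<Sum>i\<in>UNIV. y $ i * z $ i)" for y z :: "real^'t"
    have ip: "inner a (z, r) = dt a1 z + \<beta> * r" for z r unfolding a dt_def by (simp add: inner_vec_def)
    have H: "b < dt a1 z + \<beta> * r" if "(z,r) \<in> Cset" for z r using ab(2) that ip by metis
    have L: "dt a1 v + \<beta> * \<gamma> < b" using ab(1) ip by simp
    have H0: "b < dt a1 v + \<beta> * r0" using H[OF inC[OF v order_refl]] .
    have bnn: "0 \<le> \<beta>"
    proof (rule ccontr)
      assume "\<not> 0 \<le> \<beta>"
      then have bn: "\<beta> < 0" by simp
      define s where "s = (dt a1 v + \<beta> * r0 - b) / (- \<beta>)"
      have s0: "0 \<le> s" unfolding s_def using H0 bn by (intro divide_nonneg_pos) auto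
      have "\<beta> * s = - (dt a1 v + \<beta> * r0 - b)" unfolding s_def using bn by (simp add: field_simps)
      moreover have "b < dt a1 v + \<beta> * (r0 + s)" using H[OF inC[OF v, of "r0 + s"]] s0 by simp
      ultimately show False by (simp add: algebra_simps)
    qed
    have dt_axis: "dt a1 (v + axis i s) = dt a1 v + a1 $ i * s" for i s
    proof -
      have e: "(\<lambda>j. a1 $ j * (axis i s :: real^'t) $ j) = (\<lambda>j. if j = i then a1 $ i * s else 0)"
        by (auto simp: axis_def)
      have "dt a1 (v + axis i s) = dt a1 v + (\<Sum>j\<in>UNIV. a1 $ j * (axis i s :: real^'t) $ j)"
        unfolding dt_def by (simp add: distrib_left sum.distrib)
      also have "(\<Sum>j\<in>UNIV. a1 $ j * (axis i s :: real^'t) $ j) = a1 $ i * s" by (subst e) simp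
      finally show ?thesis .
    qed
    have a1nn: "0 \<le> a1 $ i" for i
    proof (rule ccontr)
      assume "\<not> 0 \<le> a1 $ i"
      then have an: "a1 $ i < 0" by simp
      define s where "s = (dt a1 v + \<beta> * r0 - b) / (- a1 $ i)"
      have s0: "0 \<le> s" unfolding s_def using H0 an by (intro divide_nonneg_pos) auto
      have "a1 $ i * s = - (dt a1 v + \<beta> * r0 - b)" unfolding s_def using an by (simp add: field_simps)
      moreover have "nonneg (v + axis i s)" using v s0 unfolding nonneg_def axis_def by auto
      then have "b < dt a1 (v + axis i s) + \<beta> * r0" using H[OF inC] by simp
      ultimately show False unfolding dt_axis by (simp add: algebra_simps)
    qed
    have bpos: "0 < \<beta>"
    proof (rule ccontr)
      assume "\<not> 0 < \<beta>"
      then have b0: "\<beta> = 0" using bnn by simp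
      have "nonneg (0::real^'t)" unfolding nonneg_def by simp
      then have "b < dt a1 0" using H[OF inC[of 0 r0]] b0 by simp
      then have "b < 0" unfolding dt_def by simp
      moreover have "0 \<le> dt a1 v" unfolding dt_def using a1nn v unfolding nonneg_def by (intro sum_nonneg) simp
      ultimately show False using L b0 by simp
    qed
    define t where "t = (1/\<beta>) *\<^sub>R a1"
    have tnn: "nonneg t" unfolding t_def nonneg_def using a1nn bpos by simp
    have dtt: "dt t z = dt a1 z / \<beta>" for z unfolding t_def dt_def by (simp add: sum_divide_distrib)
    define \<phi> where "\<phi> k = real_of_ereal (fk tail head c (orig k) (dest k) t)" for k
    have fkr: "fk tail head c (orig k) (dest k) t = ereal (\<phi> k)" if "k \<in> K" for k
      unfolding \<phi>_def using fk_real[OF c_nonneg tnn, of "x0 k" tail head "orig k" "dest k"] x0 that by blast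
    have Ft: "F t = ereal (\<Sum>k\<in>K. \<phi> k)" unfolding F_def using fkr by (intro sum_ereal_cong) blast
    have key: "\<gamma> + dt t v \<le> (\<Sum>k\<in>K. \<phi> k)"
    proof (rule ccontr)
      assume "\<not> \<gamma> + dt t v \<le> (\<Sum>k\<in>K. \<phi> k)"
      then have gap: "(\<Sum>k\<in>K. \<phi> k) < \<gamma> + dt t v" by simp
      have cK: "0 < card K" using Kne K_finite by (simp add: card_gt_0_iff)
      define \<epsilon> where "\<epsilon> = (\<gamma> + dt t v - (\<Sum>k\<in>K. \<phi> k)) / card K"
      have eps: "0 < \<epsilon>" unfolding \<epsilon>_def using gap cK by simp
      have "\<forall>k\<in>K. \<exists>y. y \<in> flow_set tail head (supply_vec (orig k) (dest k)) \<and>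
               cost y + (\<Sum>i\<in>UNIV. t $ i * y (Inl i)) < \<phi> k + \<epsilon>"
      proof
        fix k assume k: "k \<in> K"
        have "fk tail head c (orig k) (dest k) t < ereal (\<phi> k + \<epsilon>)" using fkr[OF k] eps by simp
        then have "Inf {ereal ((\<Sum>a\<in>UNIV. c a * y a) + (\<Sum>i\<in>UNIV. t $ i * y (Inl i))) | y.
                  y \<in> flow_set tail head (supply_vec (orig k) (dest k))} < ereal (\<phi> k + \<epsilon>)"
          using tnn unfolding fk_def by simp
        then obtain e where "e \<in> {ereal ((\<Sum>a\<in>UNIV. c a * y a) + (\<Sum>i\<in>UNIV. t $ i * y (Inl i))) | y.
                  y \<in> flow_set tail head (supply_vec (orig k) (dest k))}" "e < ereal (\<phi> k + \<epsilon>)"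
          unfolding Inf_less_iff by blast
        then show "\<exists>y. y \<in> flow_set tail head (supply_vec (orig k) (dest k)) \<and>
               cost y + (\<Sum>i\<in>UNIV. t $ i * y (Inl i)) < \<phi> k + \<epsilon>"
          unfolding cost_def by auto
      qed
      then obtain xs where xs: "\<forall>k\<in>K. xs k \<in> flow_set tail head (supply_vec (orig k) (dest k)) \<and>
               cost (xs k) + (\<Sum>i\<in>UNIV. t $ i * xs k (Inl i)) < \<phi> k + \<epsilon>"
        by metis
      define zs where "zs = (\<chi> i. \<Sum>k\<in>K. xs k (Inl i))"
      have "(zs, \<Sum>k\<in>K. cost (xs k)) \<in> Cset" unfolding Cset_def zs_def using xs by auto
      then have Hb: "b < dt a1 zs + \<beta> * (\<Sum>k\<in>K. cost (xs k))" by (rule H)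
      have "dt t zs = (\<Sum>k\<in>K. \<Sum>i\<in>UNIV. t $ i * xs k (Inl i))"
        unfolding dt_def zs_def by (simp add: sum_distrib_left sum.swap[of _ K])
      then have "dt t zs + (\<Sum>k\<in>K. cost (xs k)) = (\<Sum>k\<in>K. cost (xs k) + (\<Sum>i\<in>UNIV. t $ i * xs k (Inl i)))"
        by (simp add: sum.distrib)
      also have "\<dots> < (\<Sum>k\<in>K. \<phi> k + \<epsilon>)"
        using xs Kne K_finite by (intro sum_strict_mono) auto
      also have "\<dots> = (\<Sum>k\<in>K. \<phi> k) + card K * \<epsilon>" by (simp add: sum.distrib)
      also have "\<dots> = \<gamma> + dt t v" unfolding \<epsilon>_def using cK by simp
      finally have lt2: "dt t zs + (\<Sum>k\<in>K. cost (xs k)) < \<gamma> + dt t v" .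
      have "b / \<beta> < (dt a1 zs + \<beta> * (\<Sum>k\<in>K. cost (xs k))) / \<beta>"
        using Hb bpos by (simp add: divide_strict_right_mono)
      moreover have "(dt a1 zs + \<beta> * (\<Sum>k\<in>K. cost (xs k))) / \<beta> = dt t zs + (\<Sum>k\<in>K. cost (xs k))"
        unfolding dtt using bpos by (simp add: add_divide_distrib)
      moreover have "(dt a1 v + \<beta> * \<gamma>) / \<beta> < b / \<beta>" using L bpos by (simp add: divide_strict_right_mono)
      moreover have "(dt a1 v + \<beta> * \<gamma>) / \<beta> = \<gamma> + dt t v"
        unfolding dtt using bpos by (simp add: add_divide_distrib)
      ultimately show False using lt2 by simp
    qed
    have "F t - ereal (dt t v) \<le> conj_fun F v" unfolding dt_def by (rule cf_ge)
    then have "ereal ((\<Sum>k\<in>K. \<phi> k) - dt t v) \<le> ereal g0" using Ft g0 by simp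
    then have "(\<Sum>k\<in>K. \<phi> k) - dt t v \<le> g0" by simp
    then show False using key \<gamma> by simp
  qed
  moreover have "ereal (\<Sum>k\<in>K. cost (x k)) \<le> ereal mm" using x(3) by simp
  ultimately have "ereal (\<Sum>k\<in>K. cost (x k)) \<le> conj_fun F v" by (rule order_trans[rotated])
  then show ?thesis using x(1,2) unfolding F_def by blast
qed

end


lemma cf_le:
  assumes c: "\<forall>a. 0 \<le> c a" and x: "x \<in> flow_set tail head (supply_vec o' d)"
    and xv: "\<forall>i. x (Inl i) \<le> v $ i"
  shows "conj_fun (fk tail head c o' d) v \<le> ereal (\<Sum>a\<in>UNIV. c a * x a)"
  unfolding conj_fun_def
proof (rule SUP_least)
  fix t
  show "fk tail head c o' d t - ereal (\<Sum>i\<in>UNIV. t $ i * v $ i) \<le> ereal (\<Sum>a\<in>UNIV. c a * x a)"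
  proof (cases "nonneg t")
    case True
    have up: "fk tail head c o' d t \<le> ereal ((\<Sum>a\<in>UNIV. c a * x a) + (\<Sum>i\<in>UNIV. t $ i * x (Inl i)))"
      by (rule fk_upper[OF True x])
    have le: "(\<Sum>i\<in>UNIV. t $ i * x (Inl i)) \<le> (\<Sum>i\<in>UNIV. t $ i * v $ i)"
      using True xv unfolding nonneg_def by (intro sum_mono mult_left_mono) auto
    show ?thesis
    proof (cases "fk tail head c o' d t")
      case (real q)
      then show ?thesis using up le by simp
    next
      case PInf then show ?thesis using up by simp
    next
      case MInf then show ?thesis by simp
    qed
  next
    case False
    then show ?thesis by (simp add: fk_neg)
  qed
qed

lemma sum_minf:
  assumes "finite K" "K \<noteq> {}"
  shows "(\<Sum>k\<in>K. (-\<infinity>::ereal)) = -\<infinity>"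
  using assms by (induction K rule: finite_ne_induct) auto

theorem theorem4:
  fixes tail head :: "('t::finite + 'u::finite) \<Rightarrow> 'v::finite"
    and c :: "('t + 'u) \<Rightarrow> real"
    and K :: "'k set"
    and orig dest :: "'k \<Rightarrow> 'v"
    and w :: "real ^ 't"
  defines "g \<equiv> conj_fun (\<lambda>t. \<Sum>k\<in>K. fk tail head c (orig k) (dest k) t)"
    and "gk \<equiv> (\<lambda>k. conj_fun (fk tail head c (orig k) (dest k)))"
  assumes c_nonneg: "\<forall>a. 0 \<le> c a"
    and K_finite: "finite K"
    and connected: "\<forall>k\<in>K. \<exists>p. is_path tail head p (orig k) (dest k) \<and> (\<forall>a\<in>set p. a \<notin> range Inl)"
    and w_nonneg: "nonneg w"
  shows "strongly_bf g w \<longleftrightarrow>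
           (\<exists>W. decomposition K w W \<and> g w = (\<Sum>k\<in>K. gk k (W k))
              \<and> (\<forall>W'. decomposition K w W' \<and> g w = (\<Sum>k\<in>K. gk k (W' k)) \<longrightarrow> W' = W)
              \<and> (\<forall>k\<in>K. strongly_bf (gk k) (W k)))"
proof -
  interpret net tail head c K orig dest using c_nonneg K_finite by unfold_locales
  define f where "f k = fk tail head c (orig k) (dest k)" for k
  define F where "F t = (\<Sum>k\<in>K. f k t)" for t
  have g_eq: "g = conj_fun F" unfolding g_def F_def f_def by simp
  have gk_eq: "gk k = conj_fun (f k)" for k unfolding gk_def f_def by simp
  have "\<forall>k\<in>K. \<exists>x. x \<in> flow_set tail head (supply_vec (orig k) (dest k)) \<and> (\<forall>i. x (Inl i) = 0)"
  proof
    fix k assume k: "k \<in> K"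
    then obtain p where p: "is_path tail head p (orig k) (dest k)" "\<forall>a\<in>set p. a \<notin> range Inl"
      using connected by blast
    have "(\<lambda>a. real (count_list p a)) \<in> flow_set tail head (supply_vec (orig k) (dest k))"
      by (rule path_flow[OF p(1)])
    moreover have "\<forall>i. real (count_list p (Inl i)) = 0" using p(2) by (auto simp: count_list_0_iff)
    ultimately show "\<exists>x. x \<in> flow_set tail head (supply_vec (orig k) (dest k)) \<and> (\<forall>i. x (Inl i) = 0)"
      by blast
  qed
  then obtain x0 where x0: "\<forall>k\<in>K. x0 k \<in> flow_set tail head (supply_vec (orig k) (dest k)) \<and> (\<forall>i. x0 k (Inl i) = 0)"
    by metis
  have fge0: "0 \<le> f k t" if "nonneg t" for k t unfolding f_def by (rule fk_ge0[OF c_nonneg that])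
  have freal: "f k t = ereal (real_of_ereal (f k t))" if "k \<in> K" "nonneg t" for k t
    unfolding f_def using fk_real[OF c_nonneg that(2), of "x0 k" tail head "orig k" "dest k"] x0 that(1) by blast
  have fninf: "f k t \<noteq> \<infinity>" if "k \<in> K" for k t
  proof (cases "nonneg t")
    case True
    have "f k t = ereal (real_of_ereal (f k t))" by (rule freal[OF that True])
    then show ?thesis by (metis PInfty_neq_ereal(1))
  next
    case False then show ?thesis unfolding f_def by (simp add: fk_neg)
  qed
  have Fge0: "0 \<le> F t" if "nonneg t" for t unfolding F_def using fge0[OF that] by (intro sum_nonneg) auto
  show ?thesis
    unfolding g_eq gk_eq
  proof (rule abstract[OF K_finite])
    fix v :: "real^'t" and W assume D: "decomposition K v W"
    show "conj_fun F v \<le> (\<Sum>k\<in>K. conj_fun (f k) (W k))"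
      unfolding conj_fun_def[of F]
    proof (rule SUP_least)
      fix t
      show "F t - ereal (\<Sum>i\<in>UNIV. t $ i * v $ i) \<le> (\<Sum>k\<in>K. conj_fun (f k) (W k))"
      proof (cases "K = {}")
        case True
        then have "v = 0" using D unfolding decomposition_def by simp
        then show ?thesis using True unfolding F_def by simp
      next
        case Kne: False
        show ?thesis
        proof (cases "nonneg t")
          case False
          have "F t = -\<infinity>" unfolding F_def f_def using False sum_minf[OF K_finite Kne] by (simp add: fk_neg)
          then show ?thesis by simp
        next
          case True
          define \<phi> where "\<phi> k = real_of_ereal (f k t)" for k
          have Ft: "F t = ereal (\<Sum>k\<in>K. \<phi> k)" unfolding F_def \<phi>_def
            using freal[OF _ True] by (intro sum_ereal_cong) blast
          have vs: "v = (\<Sum>k\<in>K. W k)" using D unfolding decomposition_def by simp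
          have dv: "(\<Sum>i\<in>UNIV. t $ i * v $ i) = (\<Sum>k\<in>K. \<Sum>i\<in>UNIV. t $ i * W k $ i)"
            unfolding vs by (simp add: sum_distrib_left sum.swap[of _ K])
          have "F t - ereal (\<Sum>i\<in>UNIV. t $ i * v $ i) = (\<Sum>k\<in>K. ereal (\<phi> k - (\<Sum>i\<in>UNIV. t $ i * W k $ i)))"
            unfolding Ft dv by (simp add: sum_subtractf)
          also have "\<dots> \<le> (\<Sum>k\<in>K. conj_fun (f k) (W k))"
          proof (rule sum_mono)
            fix k assume k: "k \<in> K"
            have "f k t - ereal (\<Sum>i\<in>UNIV. t $ i * W k $ i) \<le> conj_fun (f k) (W k)" by (rule cf_ge)
            show "ereal (\<phi> k - (\<Sum>i\<in>UNIV. t $ i * W k $ i)) \<le> conj_fun (f k) (W k)"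
            proof -
              have e: "f k t = ereal (\<phi> k)" using freal[OF k True] unfolding \<phi>_def .
              show ?thesis using \<open>f k t - ereal (\<Sum>i\<in>UNIV. t $ i * W k $ i) \<le> conj_fun (f k) (W k)\<close> unfolding e by simp
            qed
          qed
          finally show ?thesis .
        qed
      qed
    qed
  next
    fix v :: "real^'t" assume v: "nonneg v" and gv: "conj_fun F v \<noteq> \<infinity>"
    have g0: "0 \<le> conj_fun F v"
    proof -
      have "F 0 - ereal (\<Sum>i\<in>UNIV. 0 $ i * v $ i) \<le> conj_fun F v" by (rule cf_ge)
      moreover have "0 \<le> F 0" using Fge0 by (simp add: nonneg_def)
      ultimately show ?thesis by simp
    qed
    show "\<exists>W. decomposition K v W \<and> (\<Sum>k\<in>K. conj_fun (f k) (W k)) \<le> conj_fun F v"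
    proof (cases "K = {}")
      case True
      have v0: "v = 0"
      proof (rule ccontr)
        assume "v \<noteq> 0"
        then obtain i where "v $ i \<noteq> 0" by (auto simp: vec_eq_iff)
        then have vi: "0 < v $ i" using v unfolding nonneg_def by (metis less_eq_real_def)
        have "conj_fun F v = \<infinity>"
        proof (rule ereal_top)
          fix B
          define s where "s = max 0 (B / v $ i)"
          have sB: "B \<le> s * v $ i"
          proof -
            have "B / v $ i \<le> s" unfolding s_def by simp
            then have "B / v $ i * v $ i \<le> s * v $ i" using vi by (intro mult_right_mono) auto
            then show ?thesis using vi by simp
          qed
          have "F (axis i (-s)) - ereal (\<Sum>j\<in>UNIV. axis i (-s) $ j * v $ j) \<le> conj_fun F v" by (rule cf_ge)
          then have "ereal (s * v $ i) \<le> conj_fun F v" unfolding axis_dot F_def using True by simp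
          then show "ereal B \<le> conj_fun F v" using sB by (metis ereal_less_eq(3) order_trans)
        qed
        then show False using gv by simp
      qed
      have "decomposition K v (\<lambda>k. 0)" unfolding decomposition_def using True v0 by (simp add: nonneg_def)
      then show ?thesis using True g0 by auto
    next
      case Kne: False
      obtain x where x: "\<forall>k\<in>K. x k \<in> flow_set tail head (supply_vec (orig k) (dest k))"
        "\<forall>i. (\<Sum>k\<in>K. x k (Inl i)) \<le> v $ i"
        "ereal (\<Sum>k\<in>K. cost (x k)) \<le> conj_fun F v"
        using duality[OF x0 Kne v] unfolding F_def f_def by blast
      obtain k0 where k0: "k0 \<in> K" using Kne by blast
      define pr where "pr y = (\<chi> i. y (Inl i))" for y :: "('t+'u) \<Rightarrow> real"
      define S where "S = v - (\<Sum>k\<in>K. pr (x k))"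
      define W where "W k = (if k \<in> K then pr (x k) + (if k = k0 then S else 0) else 0)" for k
      have Snn: "nonneg S" unfolding S_def pr_def nonneg_def using x(2) by simp
      have xnn: "nonneg (pr (x k))" if "k \<in> K" for k
        using x(1) that unfolding pr_def nonneg_def flow_set_def by simp
      have D: "decomposition K v W"
        unfolding decomposition_def
      proof (intro conjI ballI allI impI)
        fix k assume k: "k \<in> K"
        show "nonneg (W k)" using xnn[OF k] Snn k unfolding W_def nonneg_def by simp
      next
        fix k assume "k \<notin> K" then show "W k = 0" unfolding W_def by simp
      next
        have "(\<Sum>k\<in>K. W k) = (\<Sum>k\<in>K. pr (x k) + (if k = k0 then S else 0))"
          unfolding W_def by (rule sum.cong) auto
        also have "\<dots> = (\<Sum>k\<in>K. pr (x k)) + S" using k0 K_finite by (simp add: sum.distrib)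
        finally show "(\<Sum>k\<in>K. W k) = v" unfolding S_def by simp
      qed
      have "(\<Sum>k\<in>K. conj_fun (f k) (W k)) \<le> (\<Sum>k\<in>K. ereal (cost (x k)))"
      proof (rule sum_mono)
        fix k assume k: "k \<in> K"
        have xv: "\<forall>i. x k (Inl i) \<le> W k $ i" using Snn k unfolding W_def pr_def nonneg_def by simp
        have xk: "x k \<in> flow_set tail head (supply_vec (orig k) (dest k))" using x(1) k by blast
        show "conj_fun (f k) (W k) \<le> ereal (cost (x k))"
          unfolding f_def cost_def by (rule cf_le[OF c_nonneg xk xv])
      qed
      also have "\<dots> = ereal (\<Sum>k\<in>K. cost (x k))" by simp
      also have "\<dots> \<le> conj_fun F v" by (rule x(3))
      finally show ?thesis using D by blast
    qed
  next
    fix v :: "real^'t" assume "conj_fun F v \<noteq> \<infinity>"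
    then show "nonneg v" using cf_nn[of F v] Fge0 by blast
  next
    fix k and v :: "real^'t" assume k: "k \<in> K" and "conj_fun (f k) v \<noteq> \<infinity>"
    then show "nonneg v" using cf_nn[of "f k" v] fge0 by blast
  next
    fix k and v :: "real^'t" assume k: "k \<in> K" and v: "nonneg v"
    have xv: "\<forall>i. x0 k (Inl i) \<le> v $ i" using x0 k v unfolding nonneg_def by simp
    have xk: "x0 k \<in> flow_set tail head (supply_vec (orig k) (dest k))" using x0 k by blast
    have "conj_fun (f k) v \<le> ereal (cost (x0 k))"
      unfolding f_def cost_def by (rule cf_le[OF c_nonneg xk xv])
    then show "conj_fun (f k) v \<noteq> \<infinity>" by auto
  next
    fix k and v :: "real^'t" assume k: "k \<in> K"
    have "0 \<le> f k 0" using fge0 by (simp add: nonneg_def)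
    then show "conj_fun (f k) v \<noteq> -\<infinity>" by (rule cf_minf)
  next
    fix k and x y :: "real^'t" and u a b :: real assume k: "k \<in> K" and "conj_fun (f k) x \<le> ereal a" "conj_fun (f k) y \<le> ereal b" "0 \<le> u" "u \<le> 1"
    then show "conj_fun (f k) ((1-u) *\<^sub>R x + u *\<^sub>R y) \<le> ereal ((1-u)*a + u*b)"
      using cf_conv[of "f k"] fninf[OF k] by blast
  next
    show "nonneg w" by (rule w_nonneg)
  qed
qed

end
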